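(* Let $n\geq 1$ and $k\geq 0$ be integers, let $0\leq i\leq n-1$ and $0\leq j\leq k$, and define \[ i'=\Big\lfloor \frac{(n+1)k-(k+1)i-j}{k+1}\Big\rfloor,\qquad j'=(n+1)k-(k+1)i-j-(k+1)i'. \] If $\pi\in\Gamma^k(n,i;j)$, then $\varphi(\pi)\in\Gamma^k(n,i';j')$.
   Context: For a permutation $\pi=\pi_1\cdots\pi_n$ of $[n]=\{1,\dots,n\}$, $\mathrm{des}(\pi)$ is the number of $m\in[n-1]$ with $\pi_m>\pi_{m+1}$, and $\mathrm{maxdrop}(\pi)=\max\{m-\pi_m:1\leq m\leq n\}$. $A_{n,k}$ is the set of permutations of $[n]$ with $\mathrm{maxdrop}(\pi)\leq k$. For $0\le i\le n-1$ and $0\le j\le k$, $\Gamma^k(n,i;j)$ is the set of $\pi\in A_{n,k}$ with $\mathrm{des}(\pi)=i$ and $\pi_n=n-k+j$. For a permutation $\sigma$ of $[n-1]$ and $1\leq r\leq n$, $\sigma\leftarrow r$ is the permutation of $[n]$ obtained by increasing every entry of $\sigma$ that is $\geq r$ by $1$ and then appending $r$ at the end. The map $\varphi:A_{n,k}\to A_{n,k}$ is defined recursively: $\varphi(1)=1$; for $n\geq 2$ and $\pi\in A_{n,k}$, let $i=\mathrm{des}(\pi)$, $j=\pi_n-n+k$, $i'=\lfloor((n+1)k-(k+1)i-j)/(k+1)\rfloor$, $j'=(n+1)k-(k+1)i-j-(k+1)i'$, let $\pi'$ be the permutation of $[n-1]$ order-isomorphic to $\pi_1\cdots\pi_{n-1}$,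 and set $\varphi(\pi)=\varphi(\pi')\leftarrow(n-k+j')$. *)

theory Defs
  imports Main
begin

text \<open>Permutations of [n] are represented as lists pi = [pi_1, ..., pi_n] of naturals;
  list index m (0-based) stores pi_(m+1).\<close>

definition perm_of :: "nat \<Rightarrow> nat list \<Rightarrow> bool" where
  "perm_of n xs \<longleftrightarrow> length xs = n \<and> distinct xs \<and> set xs = {1..n}"

definition des :: "nat list \<Rightarrow> nat" where
  "des xs = card {m. Suc m < length xs \<and> xs ! m > xs ! Suc m}"

definition maxdrop :: "nat list \<Rightarrow> int" where
  "maxdrop xs = Max {int (Suc m) - int (xs ! m) | m. m < length xs}"

definition A :: "nat \<Rightarrow> nat \<Rightarrow> nat list set" where
  "A n k = {xs. perm_of n xs \<and> maxdrop xs \<le> int k}"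

definition Gamma :: "nat \<Rightarrow> nat \<Rightarrow> int \<Rightarrow> int \<Rightarrow> nat list set" where
  "Gamma k n i j = {xs \<in> A n k. int (des xs) = i \<and> int (last xs) = int n - int k + j}"

definition std :: "nat list \<Rightarrow> nat list" where
  "std xs = map (\<lambda>x. card {y \<in> set xs. y \<le> x}) xs"

definition ins :: "nat list \<Rightarrow> nat \<Rightarrow> nat list" where
  "ins \<sigma> r = map (\<lambda>x. if x \<ge> r then x + 1 else x) \<sigma> @ [r]"

definition iprime :: "nat \<Rightarrow> nat \<Rightarrow> int \<Rightarrow> int \<Rightarrow> int" where
  "iprime n k i j = ((int n + 1) * int k - (int k + 1) * i - j) div (int k + 1)"

definition jprime :: "nat \<Rightarrow> nat \<Rightarrow> int \<Rightarrow> int \<Rightarrow> int" where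
  "jprime n k i j = (int n + 1) * int k - (int k + 1) * i - j - (int k + 1) * iprime n k i j"

function phi :: "nat \<Rightarrow> nat list \<Rightarrow> nat list" where
  "phi k xs = (if length xs \<le> 1 then xs else
     (let n = length xs; i = int (des xs); j = int (last xs) - int n + int k;
          j' = jprime n k i j
      in ins (phi k (std (butlast xs))) (nat (int n - int k + j'))))"
  by pat_completeness auto
termination
  by (relation "measure (\<lambda>(k, xs). length xs)") (auto simp: std_def)

end

theory Submission
  imports Defs
begin

lemma arith_step:
  fixes k :: nat and a b d N N1 :: int
  assumes "N1 = (int k+1)*a + b" "0 \<le> b" "b \<le> int k" "0 \<le> d" "d \<le> int k" "N = N1 + d"
  shows "N div (int k+1) = a + (if b > N mod (int k+1) then 1 else 0)"
proof (cases "b + d \<le> int k")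
  case True
  have e: "N = (b+d) + a*(int k+1)" using assms by (simp add: algebra_simps)
  have "N div (int k+1) = a" "N mod (int k + 1) = b + d" using True assms unfolding e
    by (simp_all add: div_pos_pos_trivial mod_pos_pos_trivial)
  then show ?thesis using assms by simp
next
  case False
  have e: "N = (b+d - int k - 1) + (a+1)*(int k+1)" using assms by (simp add: algebra_simps)
  have "N div (int k+1) = a + 1" "N mod (int k + 1) = b + d - int k - 1" using False assms unfolding e
    by (simp_all add: div_pos_pos_trivial mod_pos_pos_trivial)
  then show ?thesis using assms False by simp
qed

lemma A_iff:
  assumes "n \<ge> 1"
  shows "xs \<in> A n k \<longleftrightarrow> perm_of n xs \<and> (\<forall>m<n. Suc m \<le> xs!m + k)"
proof -
  have fin: "{int (Suc m) - int (xs ! m) | m. m < length xs} = (\<lambda>m. int (Suc m) - int (xs ! m)) ` {..<length xs}"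
    by auto
  show ?thesis
  proof (cases "length xs = n")
    case True
    have "0 \<in> {..<length xs}" using True assms by auto
    then have ne: "{..<length xs} \<noteq> {}" by blast
    have "maxdrop xs \<le> int k \<longleftrightarrow> (\<forall>m<n. Suc m \<le> xs!m + k)"
    proof -
      have pe: "(int (Suc a) - int (xs!a) \<le> int k) \<longleftrightarrow> Suc a \<le> xs!a + k" for a by linarith
      show ?thesis unfolding maxdrop_def fin using ne True by (simp add: Max_le_iff pe del: of_nat_Suc) blast
    qed
    then show ?thesis unfolding A_def perm_of_def by auto
  next
    case False
    then show ?thesis unfolding A_def perm_of_def by auto
  qed
qed

lemma des_snoc:
  assumes "xs \<noteq> []"
  shows "des (xs @ [a]) = des xs + (if last xs > a then 1 else 0)"
proof -
  let ?S = "{m. Suc m < length xs \<and> xs ! m > xs ! Suc m}"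
  let ?T = "{m. Suc m < length (xs@[a]) \<and> (xs@[a]) ! m > (xs@[a]) ! Suc m}"
  have lx: "last xs = xs ! (length xs - 1)" using assms by (simp add: last_conv_nth)
  have eq: "?T = ?S \<union> (if last xs > a then {length xs - 1} else {})"
  proof -
    have "m \<in> ?T \<longleftrightarrow> m \<in> ?S \<union> (if last xs > a then {length xs - 1} else {})" for m
    proof (cases "Suc m < length xs")
      case True
      then show ?thesis by (auto simp: nth_append)
    next
      case False
      show ?thesis
      proof (cases "m = length xs - 1")
        case True
        then show ?thesis using False assms lx by (auto simp: nth_append)
      next
        case F2: False
        then show ?thesis using False by auto
      qed
    qed
    then show ?thesis by blast
  qed
  have fS: "finite ?S" by (rule finite_subset[of _ "{..<length xs}"]) auto
  have "length xs - 1 \<notin> ?S" by auto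
  then show ?thesis unfolding des_def eq using fS by auto
qed

lemma des_map:
  assumes "\<forall>x\<in>set xs. \<forall>y\<in>set xs. x < y \<longrightarrow> f x < f y"
  shows "des (map f xs) = des xs"
proof -
  have "f x > f y \<longleftrightarrow> x > y" if "x \<in> set xs" "y \<in> set xs" for x y
    using assms that by (metis less_irrefl less_trans linorder_neqE_nat)
  then have "{m. Suc m < length (map f xs) \<and> map f xs ! m > map f xs ! Suc m} =
     {m. Suc m < length xs \<and> xs ! m > xs ! Suc m}"
    by (auto simp: nth_mem)
  then show ?thesis unfolding des_def by simp
qed

lemma butlast_facts:
  assumes "perm_of n \<pi>" "\<pi> \<noteq> []"
  shows "distinct (butlast \<pi>)" "set (butlast \<pi>) = {1..n} - {last \<pi>}"
    "last \<pi> \<in> {1..n}" "length (butlast \<pi>) = n - 1"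
proof -
  have e: "\<pi> = butlast \<pi> @ [last \<pi>]" using assms(2) by simp
  have d: "distinct \<pi>" "set \<pi> = {1..n}" "length \<pi> = n" using assms(1) unfolding perm_of_def by auto
  from d(1) e have "distinct (butlast \<pi> @ [last \<pi>])" by simp
  then show "distinct (butlast \<pi>)" by simp
  from d(1) e have nin: "last \<pi> \<notin> set (butlast \<pi>)" by (metis distinct_append list.set_intros(1) disjoint_iff)
  from d(2) e have "set (butlast \<pi>) \<union> {last \<pi>} = {1..n}" by (metis set_append list.set(2) Un_empty_right set_empty2 empty_set insert_is_Un sup_commute)
  then show "set (butlast \<pi>) = {1..n} - {last \<pi>}" using nin by blast
  show "last \<pi> \<in> {1..n}" using d(2) assms(2) last_in_set by blast
  show "length (butlast \<pi>) = n - 1" using d(3) by simp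
qed

lemma std_butlast:
  assumes "perm_of n \<pi>" "\<pi> \<noteq> []"
  shows "std (butlast \<pi>) = map (\<lambda>x. if x < last \<pi> then x else x - 1) (butlast \<pi>)"
  unfolding std_def
proof (rule map_cong[OF refl])
  fix x assume x: "x \<in> set (butlast \<pi>)"
  note bf = butlast_facts[OF assms]
  have xr: "x \<in> {1..n}" "x \<noteq> last \<pi>" using x bf(2) by auto
  have s: "{y \<in> set (butlast \<pi>). y \<le> x} = {1..x} - {last \<pi>}" unfolding bf(2) using xr(1) by auto
  have c: "card ({1..x} - {last \<pi>}) = x - (if last \<pi> \<in> {1..x} then 1 else 0)"
    by (simp add: card_Diff_singleton_if)
  have "(if last \<pi> \<in> {1..x} then 1 else 0) = (if x < last \<pi> then 0 else (1::nat))"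
    using xr bf(3) by auto
  then show "card {y \<in> set (butlast \<pi>). y \<le> x} = (if x < last \<pi> then x else x - 1)"
    unfolding s c by simp
qed

lemma perm_del:
  assumes "perm_of (Suc n1) \<pi>"
  shows "perm_of n1 (map (\<lambda>x. if x < last \<pi> then x else x - 1) (butlast \<pi>))"
proof -
  have ne: "\<pi> \<noteq> []" using assms unfolding perm_of_def by auto
  note bf = butlast_facts[OF assms ne]
  let ?v = "last \<pi>"
  let ?h = "\<lambda>x. if x < ?v then x else x - 1"
  have inj: "inj_on ?h ({1..Suc n1} - {?v})"
    by (rule inj_onI) (auto split: if_splits)
  have img: "?h ` ({1..Suc n1} - {?v}) = {1..n1}"
  proof
    show "?h ` ({1..Suc n1} - {?v}) \<subseteq> {1..n1}" using bf(3) by auto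
  next
    show "{1..n1} \<subseteq> ?h ` ({1..Suc n1} - {?v})"
    proof
      fix y assume y: "y \<in> {1..n1}"
      show "y \<in> ?h ` ({1..Suc n1} - {?v})"
      proof (cases "y < ?v")
        case True
        then show ?thesis using y by (intro image_eqI[of _ _ y]) auto
      next
        case False
        then show ?thesis using y by (intro image_eqI[of _ _ "Suc y"]) auto
      qed
    qed
  qed
  have "length (map ?h (butlast \<pi>)) = n1" using bf(4) by simp
  moreover have "distinct (map ?h (butlast \<pi>))" using bf(1,2) inj by (simp add: distinct_map)
  moreover have "set (map ?h (butlast \<pi>)) = {1..n1}" using bf(2) img by simp
  ultimately show ?thesis unfolding perm_of_def by blast
qed

lemma ins_facts:
  shows "ins \<rho> r = map (\<lambda>x. if x \<ge> r then x + 1 else x) \<rho> @ [r]"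
  by (simp add: ins_def)

lemma perm_ins:
  assumes "perm_of n1 \<rho>" "1 \<le> r" "r \<le> Suc n1"
  shows "perm_of (Suc n1) (ins \<rho> r)"
proof -
  let ?g = "\<lambda>x. if x \<ge> r then x + 1 else (x::nat)"
  have inj: "inj ?g" by (rule injI) (auto split: if_splits)
  have d: "distinct \<rho>" "set \<rho> = {1..n1}" "length \<rho> = n1" using assms(1) unfolding perm_of_def by auto
  have nin: "r \<notin> ?g ` {1..n1}" by (auto split: if_splits)
  have img: "?g ` {1..n1} \<union> {r} = {1..Suc n1}"
  proof
    show "?g ` {1..n1} \<union> {r} \<subseteq> {1..Suc n1}" using assms by auto
  next
    show "{1..Suc n1} \<subseteq> ?g ` {1..n1} \<union> {r}"
    proof
      fix y assume y: "y \<in> {1..Suc n1}"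
      show "y \<in> ?g ` {1..n1} \<union> {r}"
      proof (cases "y < r")
        case True
        then show ?thesis using y assms by (intro UnI1 image_eqI[of _ _ y]) auto
      next
        case False
        show ?thesis
        proof (cases "y = r")
          case True then show ?thesis by simp
        next
          case F: False
          then show ?thesis using y assms False by (intro UnI1 image_eqI[of _ _ "y - 1"]) auto
        qed
      qed
    qed
  qed
  have "length (map ?g \<rho> @ [r]) = Suc n1" using d by simp
  moreover have "distinct (map ?g \<rho> @ [r])" using d(1,2) nin inj_on_subset[OF inj]
    by (simp add: distinct_map)
  moreover have "set (map ?g \<rho> @ [r]) = {1..Suc n1}" using d(2) img by simp
  ultimately show ?thesis unfolding perm_of_def ins_def by blast
qed

lemma jprime_mod: "jprime n k i j = ((int n+1)*int k - (int k+1)*i - j) mod (int k+1)"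
  unfolding jprime_def iprime_def by (simp add: minus_mult_div_eq_mod)

lemma jprime_bounds: "0 \<le> jprime n k i j" "jprime n k i j \<le> int k"
proof -
  have "x mod (int k+1) < int k + 1" for x by (rule pos_mod_bound) simp
  then show "jprime n k i j \<le> int k" unfolding jprime_mod by (meson zle_add1_eq_le)
  show "0 \<le> jprime n k i j" unfolding jprime_mod by simp
qed

lemma jp_lb:
  fixes n k v i :: nat
  assumes "1 \<le> v" "v \<le> n"
  shows "int n - int k + jprime n k (int i) (int v - int n + int k) \<ge> 1"
proof (cases "n \<le> k")
  case False
  then show ?thesis using jprime_bounds(1)[of n k "int i" "int v - int n + int k"] by linarith
next
  case True
  have e: "(int n+1)*int k - (int k+1)*int i - (int v - int n + int k) = (int k + 1 - int v) + (int n - int i - 1)*(int k+1)"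
    by (simp add: algebra_simps)
  have "((int k + 1 - int v) + (int n - int i - 1)*(int k+1)) mod (int k+1) = (int k + 1 - int v) mod (int k+1)"
    by (rule mod_mult_self1)
  also have "\<dots> = int k + 1 - int v" by (rule mod_pos_pos_trivial) (use assms True in linarith)+
  finally have "jprime n k (int i) (int v - int n + int k) = int k + 1 - int v"
    unfolding jprime_mod e .
  then show ?thesis using assms by linarith
qed

lemma des_ins:
  assumes "\<rho> \<noteq> []"
  shows "des (ins \<rho> r) = des \<rho> + (if last \<rho> \<ge> r then 1 else 0)"
proof -
  let ?g = "\<lambda>x. if x \<ge> r then x + 1 else (x::nat)"
  have m: "des (map ?g \<rho>) = des \<rho>" by (rule des_map) auto
  have "des (ins \<rho> r) = des (map ?g \<rho>) + (if last (map ?g \<rho>) > r then 1 else 0)"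
    unfolding ins_def using assms by (simp add: des_snoc)
  also have "last (map ?g \<rho>) = ?g (last \<rho>)" using assms by (simp add: last_map)
  finally show ?thesis using m by auto
qed

lemma ins_A:
  assumes "\<rho> \<in> A n1 k" "1 \<le> n1" "1 \<le> r" "r \<le> Suc n1" "Suc n1 \<le> r + k"
  shows "ins \<rho> r \<in> A (Suc n1) k"
proof -
  have p: "perm_of n1 \<rho>" and dr: "\<forall>m<n1. Suc m \<le> \<rho>!m + k" using assms A_iff by auto
  have l: "length \<rho> = n1" using p perm_of_def by auto
  have "\<forall>m<Suc n1. Suc m \<le> ins \<rho> r ! m + k"
  proof (intro allI impI)
    fix m assume m: "m < Suc n1"
    show "Suc m \<le> ins \<rho> r ! m + k"
    proof (cases "m < n1")
      case True
      then show ?thesis using dr l unfolding ins_def by (auto simp: nth_append)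
    next
      case False
      then have "m = n1" using m by simp
      then show ?thesis using l assms(5) unfolding ins_def by (simp add: nth_append)
    qed
  qed
  then show ?thesis using A_iff perm_ins[OF p assms(3,4)] by simp
qed

lemma phi_step:
  assumes "2 \<le> length xs"
  shows "phi k xs = ins (phi k (std (butlast xs)))
     (nat (int (length xs) - int k + jprime (length xs) k (int (des xs)) (int (last xs) - int (length xs) + int k)))"
  using assms by (subst phi.simps) (simp add: Let_def)

lemma main:
  "\<pi> \<in> A n k \<Longrightarrow> 1 \<le> n \<Longrightarrow> phi k \<pi> \<in> A n k
    \<and> int (des (phi k \<pi>)) = iprime n k (int (des \<pi>)) (int (last \<pi>) - int n + int k)
    \<and> int (last (phi k \<pi>)) = int n - int k + jprime n k (int (des \<pi>)) (int (last \<pi>) - int n + int k)"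
proof (induction n arbitrary: \<pi>)
  case 0
  then show ?case by simp
next
  case (Suc n1)
  show ?case
  proof (cases "n1 = 0")
    case True
    have p: "perm_of 1 \<pi>" using Suc.prems True A_iff by auto
    then have l1: "length \<pi> = 1" "set \<pi> = {1}" unfolding perm_of_def by auto
    then obtain x where "\<pi> = [x]" by (cases \<pi>) auto
    then have "\<pi> = [1]" using l1 by simp
    moreover have "phi k [1] = [1]" by (subst phi.simps) simp
    moreover have "des [1] = 0" unfolding des_def by simp
    moreover have "iprime 1 k 0 (int k) = 0" unfolding iprime_def by simp
    moreover have "jprime 1 k 0 (int k) = int k" unfolding jprime_def iprime_def by simp
    ultimately show ?thesis using Suc.prems True by simp
  next
    case False
    then have n1: "1 \<le> n1" by simp
    let ?n = "Suc n1"
    have pA: "perm_of ?n \<pi>" and dr: "\<forall>m<?n. Suc m \<le> \<pi>!m + k" using Suc.prems A_iff by auto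
    have len: "length \<pi> = ?n" and dist: "distinct \<pi>" and st: "set \<pi> = {1..?n}" using pA perm_of_def by auto
    have ne: "\<pi> \<noteq> []" using len by auto
    define v where "v = last \<pi>"
    define bl where "bl = butlast \<pi>"
    define h where "h = (\<lambda>x. if x < v then x else x - (1::nat))"
    define \<sigma> where "\<sigma> = std bl"
    have \<sigma>h: "\<sigma> = map h bl" unfolding \<sigma>_def bl_def h_def v_def using std_butlast[OF pA ne] by simp
    have vlast: "v = \<pi> ! n1" unfolding v_def using ne len by (simp add: last_conv_nth)
    have bllen: "length bl = n1" unfolding bl_def using len by simp
    have blnth: "bl ! m = \<pi> ! m" if "m < n1" for m unfolding bl_def using that len by (simp add: nth_butlast)
    have range: "1 \<le> \<pi>!m \<and> \<pi>!m \<le> ?n" if "m < ?n" for m using that st len nth_mem by fastforce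
    have vr: "1 \<le> v" "v \<le> ?n" "?n \<le> v + k" using range[of n1] dr vlast by auto
    have neqv: "\<pi> ! m \<noteq> v" if "m < n1" for m
      unfolding vlast using that dist len by (simp add: nth_eq_iff_index_eq)
    have \<sigma>A: "\<sigma> \<in> A n1 k"
    proof -
      have "perm_of n1 \<sigma>" unfolding \<sigma>h h_def bl_def v_def by (rule perm_del[OF pA])
      moreover have "\<forall>m<n1. Suc m \<le> \<sigma>!m + k"
      proof (intro allI impI)
        fix m assume m: "m < n1"
        have sm: "\<sigma>!m = h (\<pi>!m)" unfolding \<sigma>h using m bllen blnth by simp
        show "Suc m \<le> \<sigma>!m + k"
        proof (cases "\<pi>!m < v")
          case True
          then show ?thesis using sm dr m unfolding h_def by auto
        next
          case False
          then have "\<pi>!m > v" using neqv[OF m] by simp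
          then show ?thesis using sm m vr unfolding h_def by auto
        qed
      qed
      ultimately show ?thesis using A_iff n1 by simp
    qed
    define \<rho> where "\<rho> = phi k \<sigma>"
    have IH: "\<rho> \<in> A n1 k"
      "int (des \<rho>) = iprime n1 k (int (des \<sigma>)) (int (last \<sigma>) - int n1 + int k)"
      "int (last \<rho>) = int n1 - int k + jprime n1 k (int (des \<sigma>)) (int (last \<sigma>) - int n1 + int k)"
      using Suc.IH[OF \<sigma>A n1] unfolding \<rho>_def by auto
    define u where "u = \<pi> ! (n1 - 1)"
    have ur: "1 \<le> u" "u \<le> ?n" "n1 \<le> u + k" "u \<noteq> v" unfolding u_def
      using range[of "n1 - 1"] dr[rule_format, of "n1 - 1"] n1 neqv[of "n1 - 1"] by auto
    have blne: "bl \<noteq> []" using bllen n1 by auto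
    have lastbl: "last bl = u" unfolding u_def using last_conv_nth[OF blne] bllen blnth[of "n1 - 1"] n1 by simp
    have last_s: "last \<sigma> = h u" unfolding \<sigma>h using lastbl blne by (simp add: last_map)
    have des_s: "des \<sigma> = des bl" unfolding \<sigma>h
    proof (rule des_map, intro ballI impI)
      fix x y assume "x \<in> set bl" "y \<in> set bl" "x < y"
      moreover have "v \<notin> set bl" using butlast_facts[OF pA ne] unfolding bl_def v_def by simp
      ultimately have "x \<noteq> v" "y \<noteq> v" "x < y" by auto
      then show "h x < h y" unfolding h_def by (cases "x < v"; cases "y < v") auto
    qed
    have pieq: "\<pi> = bl @ [v]" unfolding bl_def v_def using ne by simp
    have des_p: "des \<pi> = des \<sigma> + (if u > v then 1 else 0)"
      using des_snoc[OF blne, of v] pieq lastbl des_s by simp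
    define j' where "j' = jprime ?n k (int (des \<pi>)) (int v - int ?n + int k)"
    define r where "r = nat (int ?n - int k + j')"
    have phieq: "phi k \<pi> = ins \<rho> r"
      unfolding \<rho>_def r_def j'_def \<sigma>_def bl_def v_def using phi_step[of \<pi> k] len n1 by simp
    have j'b: "0 \<le> j'" "j' \<le> int k" unfolding j'_def using jprime_bounds by auto
    have rge: "int ?n - int k + j' \<ge> 1" unfolding j'_def using jp_lb[OF vr(1,2)] by simp
    have rint: "int r = int ?n - int k + j'" unfolding r_def using rge by simp
    have r1a: "1 \<le> r" using rint rge by linarith
    have r1b: "r \<le> ?n" using rint j'b by linarith
    have r1c: "?n \<le> r + k" using rint j'b by linarith
    note r1 = r1a r1b r1c
    have insA: "ins \<rho> r \<in> A ?n k" by (rule ins_A[OF IH(1) n1 r1])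
    have \<rho>ne: "\<rho> \<noteq> []" using IH(1) n1 unfolding A_def perm_of_def by auto
    have lastins: "last (ins \<rho> r) = r" unfolding ins_def by simp
    define K where "K = int k"
    define N1 where "N1 = (int n1+1)*K - (K+1)*int (des \<sigma>) - (int (h u) - int n1 + K)"
    define N where "N = (int ?n+1)*K - (K+1)*int (des \<pi>) - (int v - int ?n + K)"
    define a where "a = N1 div (K+1)"
    define b where "b = N1 mod (K+1)"
    have ia: "iprime n1 k (int (des \<sigma>)) (int (last \<sigma>) - int n1 + int k) = a"
      unfolding a_def N1_def iprime_def K_def last_s ..
    have jb: "jprime n1 k (int (des \<sigma>)) (int (last \<sigma>) - int n1 + int k) = b"
      unfolding b_def N1_def jprime_mod K_def last_s ..
    have bb: "0 \<le> b" "b \<le> K" using jprime_bounds[of n1 k] jb unfolding K_def by metis+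
    have j'N: "j' = N mod (K+1)" unfolding j'_def N_def jprime_mod K_def ..
    have N1ab: "N1 = (K+1)*a + b" unfolding a_def b_def by simp
    have dbounds: "0 \<le> N - N1 \<and> N - N1 \<le> K"
    proof (cases "u > v")
      case True
      then have "N - N1 = int u - 1 - int v" unfolding N_def N1_def des_p h_def
        by (simp add: algebra_simps of_nat_diff)
      then show ?thesis using True ur vr unfolding K_def by linarith
    next
      case False
      then have uv: "u < v" using ur by simp
      then have "N - N1 = K + 1 - int v + int u" unfolding N_def N1_def des_p h_def
        by (simp add: algebra_simps)
      then show ?thesis using uv ur vr unfolding K_def by linarith
    qed
    have key: "N div (K+1) = a + (if b > N mod (K+1) then 1 else 0)"
      using arith_step[of N1 k a b "N - N1" N] N1ab bb dbounds unfolding K_def by simp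
    have desfin: "int (des (ins \<rho> r)) = iprime ?n k (int (des \<pi>)) (int v - int ?n + int k)"
    proof -
      have "int (des (ins \<rho> r)) = int (des \<rho>) + (if last \<rho> \<ge> r then 1 else 0)"
        using des_ins[OF \<rho>ne, of r] by simp
      also have "(last \<rho> \<ge> r) = (b > j')" using IH(3) jb rint unfolding K_def by linarith
      also have "int (des \<rho>) = a" using IH(2) ia by simp
      finally show ?thesis using key j'N unfolding iprime_def N_def K_def by simp
    qed
    show ?thesis using insA desfin lastins rint phieq unfolding v_def j'_def by simp
  qed
qed

theorem lemma2p2:
  fixes n k :: nat and i j :: int and \<pi> :: "nat list"
  assumes "n \<ge> 1" and "0 \<le> i" and "i \<le> int n - 1" and "0 \<le> j" and "j \<le> int k"
    and "\<pi> \<in> Gamma k n i j"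
  shows "phi k \<pi> \<in> Gamma k n (iprime n k i j) (jprime n k i j)"
proof -
  have A: "\<pi> \<in> A n k" and di: "int (des \<pi>) = i" and lj: "int (last \<pi>) = int n - int k + j"
    using assms(6) unfolding Gamma_def by auto
  have jj: "j = int (last \<pi>) - int n + int k" using lj by simp
  show ?thesis using main[OF A assms(1)] unfolding Gamma_def di jj by simp
qed

end
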